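(* For every integer $g\ge 0$, let $n'_g$ denote the number of gapsets of genus $g$ and depth at most $3$. Let $(\mathrm{F}_n)_{n\ge0}$ be the Fibonacci numbers ($\mathrm{F}_0=0$, $\mathrm{F}_1=1$, $\mathrm{F}_n=\mathrm{F}_{n-1}+\mathrm{F}_{n-2}$) and $(\mathrm{T}_n)_{n\ge 0}$ the tribonacci numbers ($\mathrm{T}_0=0$, $\mathrm{T}_1=\mathrm{T}_2=1$, $\mathrm{T}_n=\mathrm{T}_{n-1}+\mathrm{T}_{n-2}+\mathrm{T}_{n-3}$ for $n\ge3$). Then for all $g\ge 3$, $$2\mathrm{F}_g \,\le\, n'_g \,\le\, \mathrm{T}_{g+1}.$$
   Context: A gapset is a finite set $G \subset \mathbb{N}_+=\{1,2,3,\dots\}$ such that for all $z \in G$, whenever $z=x+y$ with $x,y\in\mathbb{N}_+$, we have $x\in G$ or $y\in G$. The multiplicity of $G$ is the least $m\ge 1$ with $m\notin G$; its conductor is $c=\max G+1$ (with $c=0$ if $G=\emptyset$); its genus is $|G|$; its depth is $\lceil c/m\rceil$. *)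

theory Defs
  imports Main "HOL-Number_Theory.Fib"
begin

definition gapset :: "nat set \<Rightarrow> bool" where
  "gapset G \<longleftrightarrow> finite G \<and> 0 \<notin> G \<and>
     (\<forall>z\<in>G. \<forall>x y. x > 0 \<and> y > 0 \<and> z = x + y \<longrightarrow> x \<in> G \<or> y \<in> G)"

definition multiplicity_gs :: "nat set \<Rightarrow> nat" where
  "multiplicity_gs G = (LEAST m. m \<ge> 1 \<and> m \<notin> G)"

definition conductor_gs :: "nat set \<Rightarrow> nat" where
  "conductor_gs G = (if G = {} then 0 else Max G + 1)"

definition genus_gs :: "nat set \<Rightarrow> nat" where
  "genus_gs G = card G"

definition depth_gs :: "nat set \<Rightarrow> nat" where
  "depth_gs G = nat \<lceil>real (conductor_gs G) / real (multiplicity_gs G)\<rceil>"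

fun trib :: "nat \<Rightarrow> nat" where
  "trib 0 = 0"
| "trib (Suc 0) = 1"
| "trib (Suc (Suc 0)) = 1"
| "trib (Suc (Suc (Suc n))) = trib (Suc (Suc n)) + trib (Suc n) + trib n"

definition n'_count :: "nat \<Rightarrow> nat" where
  "n'_count g = card {G. gapset G \<and> genus_gs G = g \<and> depth_gs G \<le> 3}"

end

theory Submission
  imports Defs
begin

definition C :: "nat set \<Rightarrow> nat \<Rightarrow> nat list set" where
  "C S n = {xs. set xs \<subseteq> S \<and> sum_list xs = n}"

lemma C_0: "0 \<notin> S \<Longrightarrow> C S 0 = {[]}"
proof -
  assume "0 \<notin> S"
  have "xs = []" if "set xs \<subseteq> S" "sum_list xs = 0" for xs
    using that \<open>0 \<notin> S\<close> by (cases xs) auto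
  then show ?thesis unfolding C_def by auto
qed

lemma C_pos1: assumes "0 \<notin> S" "n > 0" "xs \<in> C S n"
 shows "xs \<in> (\<Union>k\<in>S\<inter>{1..n}. Cons k ` C S (n-k))"
proof -
    have h: "set xs \<subseteq> S" "sum_list xs = n" using assms by (auto simp: C_def)
    then obtain a ys where xs: "xs = a # ys" using assms by (cases xs) auto
    have aS: "a \<in> S" using h xs by auto
    have "a \<noteq> 0" using aS assms(1) by metis
    have "a \<le> n" using h xs by auto
    note aS this \<open>a \<noteq> 0\<close>
    moreover have "ys \<in> C S (n-a)" using h xs by (auto simp: C_def)
    ultimately have "a \<in> S\<inter>{1..n}" "xs \<in> Cons a ` C S (n-a)" using xs by auto
    then show "xs \<in> (\<Union>k\<in>S\<inter>{1..n}. Cons k ` C S (n-k))" by blast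
qed

lemma C_pos2: assumes "k \<in> S\<inter>{1..n}" "ys \<in> C S (n-k)"
  shows "k # ys \<in> C S n"
  using assms by (auto simp: C_def)

lemma C_pos: assumes "0 \<notin> S" "n > 0"
  shows "C S n = (\<Union>k\<in>S\<inter>{1..n}. Cons k ` C S (n-k))"
  using C_pos1[OF assms] C_pos2 by blast

lemma finite_C: assumes "0 \<notin> S" shows "finite (C S n)"
proof (induction n rule: less_induct)
  case (less n)
  show ?case
  proof (cases "n = 0")
    case True then show ?thesis using C_0[OF assms] by simp
  next
    case False
    then show ?thesis using C_pos[OF assms, of n] less by auto
  qed
qed

lemma card_C_pos: assumes "0 \<notin> S" "n > 0"
  shows "card (C S n) = (\<Sum>k\<in>S\<inter>{1..n}. card (C S (n-k)))"
proof -
  have "card (C S n) = (\<Sum>k\<in>S\<inter>{1..n}. card (Cons k ` C S (n-k)))"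
    unfolding C_pos[OF assms]
    by (rule card_UN_disjoint) (auto simp: finite_C[OF assms(1)])
  also have "\<dots> = (\<Sum>k\<in>S\<inter>{1..n}. card (C S (n-k)))"
    by (rule sum.cong) (auto simp: card_image)
  finally show ?thesis .
qed

lemma card_C3: "card (C {1,2,3} n) = trib (n+1)"
proof (induction n rule: less_induct)
  case (less n)
  consider "n = 0" | "n = 1" | "n = 2" | "n \<ge> 3" by linarith
  then show ?case
  proof cases
    case 1 then show ?thesis using C_0[of "{1,2,3}"] by simp
  next
    case 2
    have "{1,2,3::nat} \<inter> {1..n} = {1}" using 2 by auto
    then show ?thesis using card_C_pos[of "{1,2,3}" n] 2 C_0[of "{1,2,3}"] by simp
  next
    case 3
    have "{1,2,3::nat} \<inter> {1..n} = {1,2}" using 3 by auto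
    then have "card (C {1,2,3} n) = card (C {1,2,3} 1) + card (C {1,2,3} 0)"
      using card_C_pos[of "{1,2,3}" n] 3 by simp
    moreover have "card (C {1,2,3} 1) = 1" using less[of 1] 3 by (simp add: numeral_2_eq_2)
    moreover have "card (C {1,2,3} 0) = 1" using C_0[of "{1,2,3}"] by simp
    moreover have "trib 3 = 2" by (simp add: numeral_3_eq_3)
    ultimately show ?thesis using 3 by simp
  next
    case 4
    have "{1,2,3::nat} \<inter> {1..n} = {1,2,3}" using 4 by auto
    then have "card (C {1,2,3} n) = card (C {1,2,3} (n-1)) + card (C {1,2,3} (n-2)) + card (C {1,2,3} (n-3))"
      using card_C_pos[of "{1,2,3}" n] 4 by simp
    also have "\<dots> = trib (n+1)"
    proof -
      define k where "k = n - 3"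
      have k: "n = Suc (Suc (Suc k))" using 4 unfolding k_def by simp
      have "card (C {1,2,3} (n-1)) = trib (Suc (Suc (Suc k)))" using less[of "n-1"] k by (simp del: trib.simps)
      moreover have "card (C {1,2,3} (n-2)) = trib (Suc (Suc k))" using less[of "n-2"] k by (simp del: trib.simps)
      moreover have "card (C {1,2,3} (n-3)) = trib (Suc k)" using less[of "n-3"] k by (simp del: trib.simps)
      ultimately show ?thesis using k by (simp del: trib.simps add: trib.simps(4)[of "Suc k"])
    qed
    finally show ?thesis .
  qed
qed

lemma card_C2: "card (C {1,2} n) = fib (n+1)"
proof (induction n rule: less_induct)
  case (less n)
  consider "n = 0" | "n = 1" | "n \<ge> 2" by linarith
  then show ?case
  proof cases
    case 1 then show ?thesis using C_0[of "{1,2}"] by simp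
  next
    case 2
    have "{1,2::nat} \<inter> {1..n} = {1}" using 2 by auto
    then show ?thesis using card_C_pos[of "{1,2}" n] 2 C_0[of "{1,2}"] by simp
  next
    case 3
    have "{1,2::nat} \<inter> {1..n} = {1,2}" using 3 by auto
    then have "card (C {1,2} n) = card (C {1,2} (n-1)) + card (C {1,2} (n-2))"
      using card_C_pos[of "{1,2}" n] 3 by simp
    also have "\<dots> = fib (n+1)"
    proof -
      define k where "k = n - 2"
      have k: "n = Suc (Suc k)" using 3 unfolding k_def by simp
      have "card (C {1,2} (n-1)) = fib (Suc (Suc k))" using less[of "n-1"] k by (simp del: fib.simps)
      moreover have "card (C {1,2} (n-2)) = fib (Suc k)" using less[of "n-2"] k by (simp del: fib.simps)
      ultimately show ?thesis using k by (simp del: fib.simps add: fib.simps(3)[of "Suc k"])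
    qed
    finally show ?thesis .
  qed
qed


definition psi :: "nat list \<Rightarrow> nat set" where
  "psi xs = {1..length xs}
     \<union> (\<lambda>i. length xs + 2 + i) ` {i. i < length xs \<and> xs!i \<ge> 2}
     \<union> (\<lambda>i. 2 * length xs + 3 + i) ` {i. i < length xs \<and> xs!i = 3}"

lemma mem_psi: "z \<in> psi xs \<longleftrightarrow>
   (1 \<le> z \<and> z \<le> length xs)
 \<or> (length xs + 2 \<le> z \<and> z < 2 * length xs + 2 \<and> xs!(z - length xs - 2) \<ge> 2)
 \<or> (2 * length xs + 3 \<le> z \<and> z < 3 * length xs + 3 \<and> xs!(z - 2 * length xs - 3) = 3)"
  (is "?L \<longleftrightarrow> ?R")
proof
  assume ?L then show ?R unfolding psi_def by auto
next
  assume ?R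
  then consider "1 \<le> z \<and> z \<le> length xs"
    | "length xs + 2 \<le> z \<and> z < 2 * length xs + 2 \<and> xs!(z - length xs - 2) \<ge> 2"
    | "2 * length xs + 3 \<le> z \<and> z < 3 * length xs + 3 \<and> xs!(z - 2 * length xs - 3) = 3"
    by blast
  then show ?L
  proof cases
    case 1 then show ?thesis unfolding psi_def by auto
  next
    case 2
    then have "z \<in> (\<lambda>i. length xs + 2 + i) ` {i. i < length xs \<and> xs!i \<ge> 2}"
      by (intro rev_image_eqI[of "z - length xs - 2"]) auto
    then show ?thesis unfolding psi_def by blast
  next
    case 3
    then have "z \<in> (\<lambda>i. 2 * length xs + 3 + i) ` {i. i < length xs \<and> xs!i = 3}"
      by (intro rev_image_eqI[of "z - 2 * length xs - 3"]) auto
    then show ?thesis unfolding psi_def by blast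
  qed
qed

lemma finite_psi: "finite (psi xs)"
  unfolding psi_def by auto

lemma mult_props:
  assumes "finite G"
  shows "multiplicity_gs G \<ge> 1" "multiplicity_gs G \<notin> G"
        "\<And>k. 1 \<le> k \<Longrightarrow> k < multiplicity_gs G \<Longrightarrow> k \<in> G"
proof -
  obtain b where "\<forall>z\<in>G. z < b" using assms finite_nat_set_iff_bounded by blast
  then have ex: "\<exists>m. m \<ge> 1 \<and> m \<notin> G" by (intro exI[of _ "b+1"]) auto
  show "multiplicity_gs G \<ge> 1" "multiplicity_gs G \<notin> G"
    unfolding multiplicity_gs_def using LeastI_ex[OF ex] by auto
  show "\<And>k. 1 \<le> k \<Longrightarrow> k < multiplicity_gs G \<Longrightarrow> k \<in> G"
    unfolding multiplicity_gs_def using not_less_Least by blast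
qed

lemma mult_psi: "multiplicity_gs (psi xs) = length xs + 1"
  unfolding multiplicity_gs_def
proof (rule Least_equality)
  show "1 \<le> length xs + 1 \<and> length xs + 1 \<notin> psi xs" by (auto simp: mem_psi)
  show "\<And>y. 1 \<le> y \<and> y \<notin> psi xs \<Longrightarrow> length xs + 1 \<le> y"
    by (rule ccontr) (auto simp: mem_psi)
qed

lemma depth_le3_iff:
  assumes "m \<ge> 1" "multiplicity_gs G = m"
  shows "depth_gs G \<le> 3 \<longleftrightarrow> conductor_gs G \<le> 3 * m"
proof -
  have "depth_gs G \<le> 3 \<longleftrightarrow> \<lceil>real (conductor_gs G) / real m\<rceil> \<le> 3"
    unfolding depth_gs_def using assms by auto
  also have "\<dots> \<longleftrightarrow> real (conductor_gs G) / real m \<le> 3"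
    by (simp add: ceiling_le_iff)
  also have "\<dots> \<longleftrightarrow> real (conductor_gs G) \<le> 3 * real m"
    using assms by (simp add: divide_le_eq)
  also have "\<dots> \<longleftrightarrow> conductor_gs G \<le> 3 * m" by linarith
  finally show ?thesis .
qed

lemma conductor_le:
  assumes "finite G" shows "conductor_gs G \<le> c \<longleftrightarrow> (\<forall>z\<in>G. z < c)"
  using assms unfolding conductor_gs_def
  by (cases "G = {}") (auto simp: Suc_le_eq)

lemma depth_psi: "depth_gs (psi xs) \<le> 3"
proof -
  have "conductor_gs (psi xs) \<le> 3 * (length xs + 1)"
    using finite_psi by (subst conductor_le) (auto simp: mem_psi)
  then show ?thesis using depth_le3_iff[OF _ mult_psi] by simp
qed

lemma psi_inj:
  assumes "psi xs = psi ys" "set xs \<subseteq> {1,2,3}" "set ys \<subseteq> {1,2,3}"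
  shows "xs = ys"
proof -
  have len: "length xs = length ys" using mult_psi[of xs] mult_psi[of ys] assms(1) by simp
  show ?thesis
  proof (rule nth_equalityI[OF len])
    fix i assume i: "i < length xs"
    let ?n = "length xs"
    have a: "xs!i \<in> {1,2,3}" "ys!i \<in> {1,2,3}" using assms i len by (auto simp: set_conv_nth)
    have e1: "xs!i \<ge> 2 \<longleftrightarrow> ys!i \<ge> 2"
    proof -
      have "?n + 2 + i \<in> psi xs \<longleftrightarrow> xs!i \<ge> 2" using i by (simp add: mem_psi)
      moreover have "?n + 2 + i \<in> psi ys \<longleftrightarrow> ys!i \<ge> 2" using i len by (simp add: mem_psi)
      ultimately show ?thesis using assms(1) by simp
    qed
    have e2: "xs!i = 3 \<longleftrightarrow> ys!i = 3"
    proof -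
      have "2 * ?n + 3 + i \<in> psi xs \<longleftrightarrow> xs!i = 3" using i by (simp add: mem_psi)
      moreover have "2 * ?n + 3 + i \<in> psi ys \<longleftrightarrow> ys!i = 3" using i len by (simp add: mem_psi)
      ultimately show ?thesis using assms(1) by simp
    qed
    show "xs!i = ys!i" using a e1 e2 by fastforce
  qed
qed

lemma card_filter: "card {i. i < (n::nat) \<and> P i} = (\<Sum>i<n. if P i then 1 else (0::nat))"
proof (induction n)
  case (Suc n)
  have "{i. i < Suc n \<and> P i} = {i. i < n \<and> P i} \<union> (if P n then {n} else {})" by (auto simp: less_Suc_eq)
  then show ?case using Suc by (auto simp: card_insert_if)
qed simp

lemma card_psi:
  assumes "set xs \<subseteq> {1,2,3}"
  shows "card (psi xs) = sum_list xs"
proof -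
  let ?n = "length xs"
  let ?I2 = "{i. i < ?n \<and> xs!i \<ge> 2}" and ?I3 = "{i. i < ?n \<and> xs!i = 3}"
  have "card (psi xs) = card {1..?n} + card ((\<lambda>i. ?n + 2 + i) ` ?I2) + card ((\<lambda>i. 2 * ?n + 3 + i) ` ?I3)"
    unfolding psi_def
    by (subst card_Un_disjoint; (auto)?)+
  also have "\<dots> = ?n + card ?I2 + card ?I3"
    by (simp add: card_image inj_on_def)
  also have "\<dots> = (\<Sum>i<?n. 1 + (if xs!i \<ge> 2 then 1 else 0) + (if xs!i = 3 then 1 else 0))"
    unfolding card_filter sum.distrib by simp
  also have "\<dots> = (\<Sum>i<?n. xs!i)"
  proof (rule sum.cong)
    fix i assume "i \<in> {..<?n}"
    then have "xs!i \<in> {1,2,3}" using assms by (auto simp: set_conv_nth)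
    then show "1 + (if xs!i \<ge> 2 then 1 else 0) + (if xs!i = 3 then 1 else 0) = xs!i" by auto
  qed simp
  also have "\<dots> = sum_list xs" by (simp add: sum_list_sum_nth atLeast0LessThan)
  finally show ?thesis .
qed


lemma gapset_psi:
  assumes "set xs \<subseteq> {1,2,3}" "\<forall>i<length xs. xs!i = 3 \<longrightarrow> i = 0"
  shows "gapset (psi xs)"
  unfolding gapset_def
proof (intro conjI ballI allI impI)
  show "finite (psi xs)" by (rule finite_psi)
  show "0 \<notin> psi xs" by (simp add: mem_psi)
  fix z x y assume z: "z \<in> psi xs" and xy: "0 < x \<and> 0 < y \<and> z = x + y"
  let ?n = "length xs"
  show "x \<in> psi xs \<or> y \<in> psi xs"
  proof (cases "x \<le> ?n \<or> y \<le> ?n")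
    case True then show ?thesis using xy by (auto simp: mem_psi)
  next
    case False
    then have big: "x \<ge> ?n + 1" "y \<ge> ?n + 1" by auto
    then have "z \<ge> 2 * ?n + 2" using xy by simp
    then have r: "2 * ?n + 3 \<le> z \<and> z < 3 * ?n + 3 \<and> xs!(z - 2 * ?n - 3) = 3"
      using z by (auto simp: mem_psi)
    moreover have "z - 2 * ?n - 3 < ?n" using r by linarith
    then have "z - 2 * ?n - 3 = 0" using assms(2) r by blast
    ultimately have z3: "z = 2 * ?n + 3" "?n > 0" "xs!0 = 3" by auto
    then have "x = ?n + 1 \<and> y = ?n + 2 \<or> x = ?n + 2 \<and> y = ?n + 1" using big xy by auto
    then show ?thesis using z3 by (auto simp: mem_psi)
  qed
qed

definition phi :: "nat set \<Rightarrow> nat list" where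
  "phi G = (let n = multiplicity_gs G - 1 in
     map (\<lambda>i. 1 + (if n+2+i \<in> G then 1 else 0) + (if 2*n+3+i \<in> G then 1 else 0)) [0..<n])"

lemma phi_props:
  assumes "gapset G" "depth_gs G \<le> 3"
  shows "psi (phi G) = G" "set (phi G) \<subseteq> {1,2,3}"
proof -
  have fin: "finite G" and z0: "0 \<notin> G"
    and gs: "\<And>z x y. z \<in> G \<Longrightarrow> 0 < x \<Longrightarrow> 0 < y \<Longrightarrow> z = x + y \<Longrightarrow> x \<in> G \<or> y \<in> G"
    using assms(1) unfolding gapset_def by blast+
  define m where "m = multiplicity_gs G"
  define n where "n = m - 1"
  have m1: "m \<ge> 1" and mG: "m \<notin> G" and below: "\<And>k. 1 \<le> k \<Longrightarrow> k < m \<Longrightarrow> k \<in> G"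
    using mult_props[OF fin] unfolding m_def by auto
  have mn: "m = n + 1" using m1 n_def by simp
  have "conductor_gs G \<le> 3 * m" using depth_le3_iff[OF m1, of G] assms(2) m_def by simp
  then have up: "\<And>z. z \<in> G \<Longrightarrow> z < 3 * n + 3" using conductor_le[OF fin] mn by auto
  have BA: "\<And>i. 2*n+3+i \<in> G \<Longrightarrow> n+2+i \<in> G"
  proof -
    fix i assume "2*n+3+i \<in> G"
    from gs[OF this, of "n+1" "n+2+i"] show "n+2+i \<in> G" using mG mn by auto
  qed
  have m2: "2*n+2 \<notin> G"
  proof
    assume "2*n+2 \<in> G"
    from gs[OF this, of "n+1" "n+1"] show False using mG mn by auto
  qed
  have phi: "phi G = map (\<lambda>i. 1 + (if n+2+i \<in> G then 1 else 0) + (if 2*n+3+i \<in> G then 1 else 0)) [0..<n]"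
    unfolding phi_def n_def m_def Let_def by simp
  show "set (phi G) \<subseteq> {1,2,3}" unfolding phi by (auto split: if_splits)
  show "psi (phi G) = G"
  proof (rule set_eqI)
    fix z
    have len: "length (phi G) = n" unfolding phi by simp
    have nth: "\<And>i. i < n \<Longrightarrow> phi G ! i = 1 + (if n+2+i \<in> G then 1 else 0) + (if 2*n+3+i \<in> G then 1 else 0)"
      unfolding phi by simp
    consider "z = 0" | "1 \<le> z \<and> z \<le> n" | "z = n + 1" | "n + 2 \<le> z \<and> z < 2*n+2"
      | "z = 2*n+2" | "2*n+3 \<le> z \<and> z < 3*n+3" | "z \<ge> 3*n+3" by linarith
    then show "z \<in> psi (phi G) \<longleftrightarrow> z \<in> G"
    proof cases
      case 1 then show ?thesis using z0 by (simp add: mem_psi)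
    next
      case 2 then show ?thesis using below mn by (simp add: mem_psi len)
    next
      case 3 then show ?thesis using mG mn by (simp add: mem_psi len)
    next
      case 4
      define i where "i = z - n - 2"
      have zi: "z = n+2+i" "i < n" using 4 i_def by auto
      have "z \<in> psi (phi G) \<longleftrightarrow> phi G ! i \<ge> 2" using 4 zi by (simp add: mem_psi len)
      also have "\<dots> \<longleftrightarrow> z \<in> G" using nth[OF zi(2)] BA[of i] zi by auto
      finally show ?thesis .
    next
      case 5 then show ?thesis using m2 by (simp add: mem_psi len)
    next
      case 6
      define i where "i = z - 2*n - 3"
      have zi: "z = 2*n+3+i" "i < n" using 6 i_def by auto
      have "z \<in> psi (phi G) \<longleftrightarrow> phi G ! i = 3" using 6 zi by (simp add: mem_psi len)
      also have "\<dots> \<longleftrightarrow> z \<in> G" using nth[OF zi(2)] BA[of i] zi by auto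
      finally show ?thesis .
    next
      case 7
      have "z \<notin> G" using up[of z] 7 by linarith
      then show ?thesis using 7 by (auto simp: mem_psi len)
    qed
  qed
qed


theorem mainTheorem3:
  fixes g :: nat
  assumes "g \<ge> 3"
  shows "2 * fib g \<le> n'_count g \<and> n'_count g \<le> trib (g + 1)"
proof -
  define Dg where "Dg = {G. gapset G \<and> genus_gs G = g \<and> depth_gs G \<le> 3}"
  have cnt: "n'_count g = card Dg" unfolding n'_count_def Dg_def by simp
  have sub: "Dg \<subseteq> psi ` C {1,2,3} g"
  proof
    fix G assume "G \<in> Dg"
    then have G: "gapset G" "card G = g" "depth_gs G \<le> 3" unfolding Dg_def genus_gs_def by auto
    have e: "psi (phi G) = G" and s: "set (phi G) \<subseteq> {1,2,3}" using phi_props[OF G(1) G(3)] by auto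
    have "sum_list (phi G) = g" using card_psi[OF s] e G(2) by simp
    then have "phi G \<in> C {1,2,3} g" using s unfolding C_def by simp
    then show "G \<in> psi ` C {1,2,3} g" using e by (metis image_eqI)
  qed
  have finC3: "finite (C {1,2,3} g)" by (rule finite_C) simp
  have finD: "finite Dg" using sub finC3 finite_surj by blast
  have upper: "card Dg \<le> trib (g+1)"
  proof -
    have "card Dg \<le> card (psi ` C {1,2,3} g)" using sub finC3 by (intro card_mono) auto
    also have "\<dots> \<le> card (C {1,2,3} g)" by (rule card_image_le[OF finC3])
    finally show ?thesis using card_C3 by simp
  qed
  define L where "L = C {1,2} g \<union> Cons 3 ` C {1,2} (g-3)"
  have finC2: "\<And>k. finite (C {1,2} k)" by (rule finite_C) simp
  have Lgood: "\<And>xs. xs \<in> L \<Longrightarrow> set xs \<subseteq> {1,2,3} \<and> sum_list xs = g \<and> (\<forall>i<length xs. xs!i = 3 \<longrightarrow> i = 0)"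
  proof -
    fix xs assume "xs \<in> L"
    then consider "xs \<in> C {1,2} g" | ys where "xs = 3 # ys" "ys \<in> C {1,2} (g-3)"
      unfolding L_def by blast
    then show "set xs \<subseteq> {1,2,3} \<and> sum_list xs = g \<and> (\<forall>i<length xs. xs!i = 3 \<longrightarrow> i = 0)"
    proof cases
      case 1
      then have "set xs \<subseteq> {1,2}" "sum_list xs = g" unfolding C_def by auto
      moreover have "\<forall>i<length xs. xs!i \<noteq> 3" using calculation(1) by (auto simp: set_conv_nth)
      ultimately show ?thesis by auto
    next
      case 2
      then have "set ys \<subseteq> {1,2}" "sum_list ys = g - 3" unfolding C_def by auto
      moreover have "\<forall>i<length ys. ys!i \<noteq> 3" using calculation(1) by (auto simp: set_conv_nth)
      ultimately show ?thesis using 2 assms by (auto simp: nth_Cons split: nat.splits)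
    qed
  qed
  have imgL: "psi ` L \<subseteq> Dg"
  proof
    fix G assume "G \<in> psi ` L"
    then obtain xs where xs: "xs \<in> L" "G = psi xs" by blast
    note h = Lgood[OF xs(1)]
    have "gapset G" using gapset_psi h xs(2) by blast
    moreover have "genus_gs G = g" unfolding genus_gs_def using card_psi h xs(2) by simp
    moreover have "depth_gs G \<le> 3" using depth_psi xs(2) by simp
    ultimately show "G \<in> Dg" unfolding Dg_def by simp
  qed
  have injL: "inj_on psi L"
  proof (rule inj_onI)
    fix xs ys assume a: "xs \<in> L" "ys \<in> L" "psi xs = psi ys"
    have "set xs \<subseteq> {1,2,3}" using Lgood[OF a(1)] by blast
    moreover have "set ys \<subseteq> {1,2,3}" using Lgood[OF a(2)] by blast
    ultimately show "xs = ys" using psi_inj[OF a(3)] by blast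
  qed
  have disj: "C {1,2} g \<inter> Cons 3 ` C {1,2} (g-3) = {}"
  proof -
    have "3 \<notin> set xs" if "xs \<in> C {1,2} g" for xs using that unfolding C_def by auto
    then show ?thesis using list.set_intros(1)[of "3::nat"] by blast
  qed
  have cardL: "card L = fib (g+1) + fib (g-2)"
  proof -
    have "card L = card (C {1,2} g) + card (Cons 3 ` C {1,2} (g-3))"
      unfolding L_def using disj finC2 by (intro card_Un_disjoint) auto
    also have "\<dots> = fib (g+1) + fib (g-3+1)"
      using card_C2 by (simp add: card_image)
    also have "g-3+1 = g-2" using assms by simp
    finally show ?thesis .
  qed
  have fibeq: "fib (g+1) + fib (g-2) = 2 * fib g"
  proof -
    define k where "k = g - 2"
    have k: "g = Suc (Suc k)" using assms k_def by simp
    have a1: "fib (g+1) = fib g + fib (Suc k)" unfolding k using fib.simps(3)[of "Suc k"] by simp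
    have a2: "fib g = fib (Suc k) + fib k" unfolding k using fib.simps(3)[of k] by simp
    have a3: "g - 2 = k" using k by simp
    show ?thesis unfolding a3 using a1 a2 by linarith
  qed
  have lower: "2 * fib g \<le> card Dg"
  proof -
    have "card (psi ` L) = card L" by (rule card_image[OF injL])
    then have "2 * fib g = card (psi ` L)" using cardL fibeq by linarith
    also have "\<dots> \<le> card Dg" using imgL finD by (intro card_mono)
    finally show ?thesis .
  qed
  show ?thesis using upper lower cnt by simp
qed

end
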